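(* Let $u\in(0,1)$ and $\mathscr{C}_n^u:=F^{-(n-1)}[u,1]$ for $n\ge1$. Then the sequence $(\lambda(\mathscr{C}_n^u))_{n\ge1}$ is decreasing.
   Context: $\lambda$ denotes Lebesgue measure on $[0,1]$. $F:[0,1]\to[0,1]$ is the Farey map, $F(x)=x/(1-x)$ for $0\le x\le 1/2$ and $F(x)=(1-x)/x$ for $1/2<x\le 1$; $F^{-k}$ denotes preimage under the $k$-th iterate. *)

theory Defs
  imports "HOL-Analysis.Analysis"
begin

definition farey :: "real \<Rightarrow> real" where
  "farey x = (if x \<le> 1/2 then x / (1 - x) else (1 - x) / x)"

definition farey_C :: "real \<Rightarrow> nat \<Rightarrow> real set" where
  "farey_C u n = {x \<in> {0..1}. (farey ^^ (n - 1)) x \<in> {u..1}}"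

end

theory Submission
  imports Defs
begin

fun mm :: "nat \<Rightarrow> real \<Rightarrow> real" where
  "mm 0 x = x"
| "mm (Suc k) x = (1/(1+x)) * mm k (x/(1+x)) + (x/(1+x)) * mm k (1/(1+x))"

fun dm :: "nat \<Rightarrow> real \<Rightarrow> real" where
  "dm 0 x = 1"
| "dm (Suc k) x = (mm k (1/(1+x)) - mm k (x/(1+x)))/(1+x)^2 + dm k (x/(1+x))/(1+x)^3
      - x * dm k (1/(1+x))/(1+x)^3"

fun HH :: "nat \<Rightarrow> real \<Rightarrow> real" where
  "HH 0 x = x"
| "HH (Suc k) x = HH k (x/(1+x)) - HH k (1/(1+x))"

lemma mm_deriv: "x > 0 \<Longrightarrow> (mm k has_real_derivative dm k x) (at x)"
proof (induction k arbitrary: x)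
  case 0 then show ?case by (auto intro!: derivative_eq_intros)
next
  case (Suc k)
  have p1: "x/(1+x) > 0" "1/(1+x) > 0" using Suc.prems by auto
  have d1: "((\<lambda>x. mm k (x/(1+x))) has_real_derivative dm k (x/(1+x)) * (1/(1+x)^2)) (at x)"
    apply (rule DERIV_chain2[where g="\<lambda>x. x/(1+x)", OF Suc.IH[OF p1(1)]])
    using Suc.prems by (auto intro!: derivative_eq_intros simp: field_simps power2_eq_square)
  have d2: "((\<lambda>x. mm k (1/(1+x))) has_real_derivative dm k (1/(1+x)) * (-1/(1+x)^2)) (at x)"
    apply (rule DERIV_chain2[where g="\<lambda>x. 1/(1+x)", OF Suc.IH[OF p1(2)]])
    using Suc.prems by (auto intro!: derivative_eq_intros simp: field_simps power2_eq_square)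
  have e1: "((\<lambda>x. 1/(1+x)) has_real_derivative -1/(1+x)^2) (at x)"
    using Suc.prems by (auto intro!: derivative_eq_intros simp: field_simps power2_eq_square)
  have e2: "((\<lambda>x. x/(1+x)) has_real_derivative 1/(1+x)^2) (at x)"
    using Suc.prems by (auto intro!: derivative_eq_intros simp: field_simps power2_eq_square)
  have "((\<lambda>x. (1/(1+x)) * mm k (x/(1+x)) + (x/(1+x)) * mm k (1/(1+x))) has_real_derivative
     (-1/(1+x)^2) * mm k (x/(1+x)) + (dm k (x/(1+x)) * (1/(1+x)^2)) * (1/(1+x))
     + (1/(1+x)^2) * mm k (1/(1+x)) + (dm k (1/(1+x)) * (-1/(1+x)^2)) * (x/(1+x))) (at x)"
    using DERIV_add[OF DERIV_mult[OF e1 d1] DERIV_mult[OF e2 d2]] by (simp only: add.assoc)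
  moreover have "(-1/(1+x)^2) * mm k (x/(1+x)) + (dm k (x/(1+x)) * (1/(1+x)^2)) * (1/(1+x))
     + (1/(1+x)^2) * mm k (1/(1+x)) + (dm k (1/(1+x)) * (-1/(1+x)^2)) * (x/(1+x)) = dm (Suc k) x"
    using Suc.prems by (simp add: divide_simps power2_eq_square power3_eq_cube) (simp add: algebra_simps)
  ultimately show ?case by (simp add: fun_eq_iff)
qed

lemma HH_deriv: "x > 0 \<Longrightarrow> (HH k has_real_derivative mm k x / x) (at x)"
proof (induction k arbitrary: x)
  case 0 then show ?case by (auto intro!: derivative_eq_intros)
next
  case (Suc k)
  have p1: "x/(1+x) > 0" "1/(1+x) > 0" using Suc.prems by auto
  have d1: "((\<lambda>x. HH k (x/(1+x))) has_real_derivative mm k (x/(1+x)) / (x/(1+x)) * (1/(1+x)^2)) (at x)"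
    apply (rule DERIV_chain2[where g="\<lambda>x. x/(1+x)", OF Suc.IH[OF p1(1)]])
    using Suc.prems by (auto intro!: derivative_eq_intros simp: field_simps power2_eq_square)
  have d2: "((\<lambda>x. HH k (1/(1+x))) has_real_derivative mm k (1/(1+x)) / (1/(1+x)) * (-1/(1+x)^2)) (at x)"
    apply (rule DERIV_chain2[where g="\<lambda>x. 1/(1+x)", OF Suc.IH[OF p1(2)]])
    using Suc.prems by (auto intro!: derivative_eq_intros simp: field_simps power2_eq_square)
  have "((\<lambda>x. HH k (x/(1+x)) - HH k (1/(1+x))) has_real_derivative
      mm k (x/(1+x)) / (x/(1+x)) * (1/(1+x)^2) - mm k (1/(1+x)) / (1/(1+x)) * (-1/(1+x)^2)) (at x)"
    by (rule DERIV_diff[OF d1 d2])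
  moreover have "mm k (x/(1+x)) / (x/(1+x)) * (1/(1+x)^2) - mm k (1/(1+x)) / (1/(1+x)) * (-1/(1+x)^2)
     = mm (Suc k) x / x"
    using Suc.prems by (simp add: divide_simps power2_eq_square)
  ultimately show ?case by (simp add: fun_eq_iff)
qed


lemma mm_mono_from:
  assumes "\<forall>t. 0 < t \<and> t \<le> 1 \<longrightarrow> dm k t \<ge> 0" "0 < s" "s \<le> t" "t \<le> 1"
  shows "mm k s \<le> mm k t"
  apply (rule DERIV_nonneg_imp_nondecreasing[OF assms(3)])
  using assms mm_deriv by force

lemma core:
  fixes m d :: "real \<Rightarrow> real"
  assumes dpos: "\<And>t. 0 < t \<Longrightarrow> t \<le> 1 \<Longrightarrow> d t \<ge> 0"
    and dmono: "\<And>s t. 0 < s \<Longrightarrow> s \<le> t \<Longrightarrow> t \<le> 1 \<Longrightarrow> d t \<le> d s"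
    and mmono: "\<And>s t. 0 < s \<Longrightarrow> s \<le> t \<Longrightarrow> t \<le> 1 \<Longrightarrow> m s \<le> m t"
    and y: "0 < y1" "y1 \<le> y2" "y2 \<le> 1/2"
  defines "B \<equiv> \<lambda>y. (m (1-y) - m y) + (1-y) * d y - y * d (1-y)"
  shows "0 \<le> (1-y2)^2 * B y2 \<and> (1-y2)^2 * B y2 \<le> (1-y1)^2 * B y1"
proof -
  have a1: "m (1-y2) \<le> m (1-y1)" using mmono[of "1-y2" "1-y1"] y by auto
  have a2: "m y1 \<le> m y2" using mmono[of y1 y2] y by auto
  have a3: "(1-y2) * d y2 \<le> (1-y1) * d y1"
    apply (rule mult_mono) using y dpos[of y2] dmono[of y1 y2] by auto
  have a4: "y1 * d (1-y1) \<le> y2 * d (1-y2)"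
    apply (rule mult_mono) using y dpos[of "1-y1"] dmono[of "1-y2" "1-y1"] by auto
  have b21: "B y2 \<le> B y1" unfolding B_def using a1 a2 a3 a4 by linarith
  have c1: "m y2 \<le> m (1-y2)" using mmono[of y2 "1-y2"] y by auto
  have c2: "y2 * d (1-y2) \<le> (1-y2) * d y2"
    apply (rule mult_mono) using y dpos[of "1-y2"] dpos[of y2] dmono[of y2 "1-y2"] by auto
  have b2: "0 \<le> B y2" unfolding B_def using c1 c2 by linarith
  have "(1-y2)^2 \<le> (1-y1)^2" using y by (auto intro!: power_mono)
  then have "(1-y2)^2 * B y2 \<le> (1-y1)^2 * B y1"
    by (rule mult_mono) (use b21 b2 in auto)
  then show ?thesis using b2 by simp
qed

lemma dm_Suc_alt: "x > -1 \<Longrightarrow> dm (Suc k) x = (1 - x/(1+x))^2 * ((mm k (1 - x/(1+x)) - mm k (x/(1+x)))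
    + (1 - x/(1+x)) * dm k (x/(1+x)) - (x/(1+x)) * dm k (1 - x/(1+x)))"
proof -
  assume x: "x > -1"
  have e: "1 - x/(1+x) = 1/(1+x)" using x by (simp add: field_simps)
  show ?thesis unfolding e using x
    by (simp add: divide_simps power2_eq_square power3_eq_cube)
qed

lemma dm_inv: "(\<forall>t. 0 < t \<and> t \<le> 1 \<longrightarrow> dm k t \<ge> 0) \<and>
   (\<forall>s t. 0 < s \<and> s \<le> t \<and> t \<le> 1 \<longrightarrow> dm k t \<le> dm k s)"
proof (induction k)
  case 0 then show ?case by simp
next
  case (Suc k)
  have dpos: "\<And>t. 0 < t \<Longrightarrow> t \<le> 1 \<Longrightarrow> dm k t \<ge> 0" using Suc.IH by blast
  have dmono: "\<And>s t. 0 < s \<Longrightarrow> s \<le> t \<Longrightarrow> t \<le> 1 \<Longrightarrow> dm k t \<le> dm k s" using Suc.IH by blast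
  have mmono: "\<And>s t. 0 < s \<Longrightarrow> s \<le> t \<Longrightarrow> t \<le> 1 \<Longrightarrow> mm k s \<le> mm k t"
    using mm_mono_from Suc.IH by blast
  note C = core[of "dm k" "mm k", OF dpos dmono mmono]
  have yb: "0 < x/(1+x)" "x/(1+x) \<le> 1/2" if "0 < x" "x \<le> 1" for x::real
    using that by (auto simp: field_simps)
  have ymono: "s/(1+s) \<le> t/(1+t)" if "0 < s" "s \<le> t" for s t :: real
    using that by (auto simp: field_simps)
  show ?case
  proof (intro conjI allI impI)
    fix t :: real assume t: "0 < t \<and> t \<le> 1"
    show "0 \<le> dm (Suc k) t"
      using C[of "t/(1+t)" "t/(1+t)"] yb[of t] t dm_Suc_alt[of t k] by auto
  next
    fix s t :: real assume st: "0 < s \<and> s \<le> t \<and> t \<le> 1"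
    show "dm (Suc k) t \<le> dm (Suc k) s"
      using C[of "s/(1+s)" "t/(1+t)"] yb[of s] yb[of t] ymono[of s t] st
        dm_Suc_alt[of t k] dm_Suc_alt[of s k] by auto
  qed
qed

lemma HH_Q:
  assumes "0 < x" "x \<le> y" "1 \<le> c" "c * y \<le> 1"
  shows "HH k y - HH k x \<le> HH k (c*y) - HH k (c*x)"
proof -
  have y0: "0 < y" using assms by auto
  have "(\<lambda>c. HH k (c*y) - HH k (c*x)) 1 \<le> (\<lambda>c. HH k (c*y) - HH k (c*x)) c"
  proof (rule DERIV_nonneg_imp_nondecreasing[OF assms(3)])
    fix b assume b: "1 \<le> b" "b \<le> c"
    have pb: "0 < b*y" "0 < b*x" using b assms y0 by auto
    have d: "((\<lambda>c. HH k (c*y) - HH k (c*x)) has_real_derivative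
        mm k (b*y)/(b*y) * y - mm k (b*x)/(b*x) * x) (at b)"
      by (rule DERIV_diff; rule DERIV_chain2[OF HH_deriv]) (use pb in \<open>auto intro!: derivative_eq_intros\<close>)
    have by1: "b*y \<le> c*y" using b y0 by (intro mult_right_mono) auto
    have by2: "b*y \<le> 1" using by1 assms(4) by linarith
    have bx: "b*x \<le> b*y" using b assms by (intro mult_left_mono) auto
    have "mm k (b*x) \<le> mm k (b*y)"
      by (rule mm_mono_from[OF _ pb(2) bx by2]) (use dm_inv in blast)
    then have "0 \<le> mm k (b*y)/(b*y) * y - mm k (b*x)/(b*x) * x"
      using pb y0 assms b by (simp add: divide_simps)
    then show "\<exists>D. ((\<lambda>c. HH k (c*y) - HH k (c*x)) has_real_derivative D) (at b) \<and> 0 \<le> D"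
      using d by blast
  qed
  then show ?thesis by simp
qed


lemma farey_range: "x \<in> {0..1} \<Longrightarrow> farey x \<in> {0..1}"
  by (auto simp: farey_def field_simps)

lemma farey_iter_range: "x \<in> {0..1} \<Longrightarrow> (farey^^k) x \<in> {0..1}"
proof (induction k)
  case (Suc k) then show ?case using farey_range[OF Suc.IH[OF Suc.prems]] by simp
qed simp

lemma farey_meas[measurable]: "farey \<in> borel_measurable borel"
  unfolding farey_def by measurable

lemma farey_iter_meas[measurable]: "(farey^^k) \<in> borel_measurable borel"
  by (induction k) (auto intro: measurable_compose[OF _ farey_meas])

lemma pre_sets: "{x\<in>{0..1}. (farey^^k) x \<in> {s..t}} \<in> sets lborel"
  by measurable

lemma pre_fmeas: "{x\<in>{0..1}. (farey^^k) x \<in> {s..t}} \<in> fmeasurable lborel"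
proof (rule fmeasurableI2[OF _ _ pre_sets])
  show "{0..1::real} \<in> fmeasurable lborel" by (auto intro!: fmeasurableI)
qed auto

lemma farey_eq_point:
  assumes "y \<in> {0..1}" "farey y = b"
  shows "y = b/(1+b) \<or> y = 1/(1+b)"
proof (cases "y \<le> 1/2")
  case True
  then have "b = y/(1-y)" using assms by (simp add: farey_def)
  then have "y*(1+b) = b" using True by (simp add: field_simps)
  moreover have "0 \<le> b" using \<open>b = y/(1-y)\<close> True assms by simp
  then have "1 + b \<noteq> 0" by simp
  ultimately show ?thesis by (simp add: eq_divide_eq)
next
  case False
  then have "b = (1-y)/y" using assms by (simp add: farey_def)
  then have "y*(1+b) = 1" using False by (simp add: field_simps)
  moreover have "0 \<le> b" using \<open>b = (1-y)/y\<close> False assms by simp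
  then have "1 + b \<noteq> 0" by simp
  ultimately show ?thesis by (simp add: eq_divide_eq)
qed

lemma pre_point_finite: "finite {x\<in>{0..1::real}. (farey^^k) x = b}"
proof (induction k arbitrary: b)
  case 0
  have "{x\<in>{0..1::real}. (farey^^0) x = b} \<subseteq> {b}" by auto
  then show ?case using finite_subset by blast
next
  case (Suc k)
  have "{x\<in>{0..1::real}. (farey^^Suc k) x = b} \<subseteq>
     {x\<in>{0..1}. (farey^^k) x = b/(1+b)} \<union> {x\<in>{0..1}. (farey^^k) x = 1/(1+b)}"
    using farey_eq_point farey_iter_range by fastforce
  then show ?case using Suc.IH finite_subset by (meson finite_UnI)
qed

lemma farey_in_iff:
  assumes "y \<in> {0..1}" "0 \<le> s" "s \<le> t" "t \<le> 1"
  shows "farey y \<in> {s..t} \<longleftrightarrow> y \<in> {s/(1+s)..t/(1+t)} \<or> y \<in> {1/(1+t)..1/(1+s)}"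
proof -
  have h1: "t/(1+t) \<le> 1/2" "s/(1+s) \<le> 1/2" "1/2 \<le> 1/(1+t)" "1/2 \<le> 1/(1+s)"
    using assms by (auto simp: field_simps)
  consider "y < 1/2" | "y = 1/2" | "y > 1/2" by linarith
  then show ?thesis
  proof cases
    case 1
    then have "y < 1/(1+t)" using h1 by linarith
    then have "\<not> y \<in> {1/(1+t)..1/(1+s)}" by auto
    moreover have "farey y \<in> {s..t} \<longleftrightarrow> y \<in> {s/(1+s)..t/(1+t)}"
      using 1 assms by (auto simp: farey_def field_simps)
    ultimately show ?thesis by blast
  next
    case 2
    have "farey y = 1" using 2 by (simp add: farey_def)
    moreover have "1/2 \<le> t/(1+t) \<longleftrightarrow> t = 1" using assms by (auto simp: field_simps)
    moreover have "1/(1+t) \<le> 1/2 \<longleftrightarrow> t = 1" using assms by (auto simp: field_simps)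
    ultimately show ?thesis unfolding 2 using assms h1 by auto
  next
    case 3
    then have "t/(1+t) < y" using h1 by linarith
    then have "\<not> y \<in> {s/(1+s)..t/(1+t)}" by auto
    moreover have "farey y \<in> {s..t} \<longleftrightarrow> y \<in> {1/(1+t)..1/(1+s)}"
      using 3 assms by (auto simp: farey_def field_simps)
    ultimately show ?thesis by blast
  qed
qed


lemma pre_interval:
  "0 \<le> s \<Longrightarrow> s \<le> t \<Longrightarrow> t \<le> 1 \<Longrightarrow>
   measure lborel {x\<in>{0..1}. (farey^^k) x \<in> {s..t}} = HH k t - HH k s"
proof (induction k arbitrary: s t)
  case 0
  have "{x\<in>{0..1::real}. (farey^^0) x \<in> {s..t}} = {s..t}" using 0 by auto
  then show ?case using 0 by simp
next
  case (Suc k)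
  define E1 where "E1 = {x\<in>{0..1::real}. (farey^^k) x \<in> {s/(1+s)..t/(1+t)}}"
  define E2 where "E2 = {x\<in>{0..1::real}. (farey^^k) x \<in> {1/(1+t)..1/(1+s)}}"
  have eq: "{x\<in>{0..1}. (farey^^Suc k) x \<in> {s..t}} = E1 \<union> E2"
    unfolding E1_def E2_def using farey_in_iff[OF farey_iter_range _ _ _] Suc.prems
    by auto
  have h1: "t/(1+t) \<le> 1/2" "1/2 \<le> 1/(1+t)"
    using Suc.prems by (auto simp: field_simps)
  have sub: "E1 \<inter> E2 \<subseteq> {x\<in>{0..1}. (farey^^k) x = 1/2}"
  proof (rule subsetI)
    fix x assume "x \<in> E1 \<inter> E2"
    then have a: "x\<in>{0..1}" "(farey^^k) x \<le> t/(1+t)" "1/(1+t) \<le> (farey^^k) x"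
      unfolding E1_def E2_def by auto
    then have "(farey^^k) x = 1/2" using h1 by linarith
    then show "x \<in> {x\<in>{0..1}. (farey^^k) x = 1/2}" using a by simp
  qed
  have null: "E1 \<inter> E2 \<in> null_sets lborel"
    by (rule null_sets_subset[OF finite_imp_null_set_lborel[OF pre_point_finite] _ sub])
       (unfold E1_def E2_def, intro sets.Int pre_sets)
  have "measure lborel (E1 \<union> E2) = measure lborel E1 + measure lborel E2 - measure lborel (E1 \<inter> E2)"
    unfolding E1_def E2_def by (rule measure_Un3) (rule pre_fmeas)+
  also have "measure lborel (E1 \<inter> E2) = 0" using null by (rule measure_eq_0_null_sets)
  also have "measure lborel E1 = HH k (t/(1+t)) - HH k (s/(1+s))"
    unfolding E1_def using Suc.prems by (intro Suc.IH) (auto simp: field_simps)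
  also have "measure lborel E2 = HH k (1/(1+s)) - HH k (1/(1+t))"
    unfolding E2_def using Suc.prems by (intro Suc.IH) (auto simp: field_simps)
  finally show ?case using eq by simp
qed

theorem theorem2:
  fixes u :: real
  assumes "0 < u" and "u < 1"
  shows "\<forall>n\<ge>1. measure lborel (farey_C u (Suc n)) \<le> measure lborel (farey_C u n)"
proof (intro allI impI)
  fix n :: nat assume n: "n \<ge> 1"
  then obtain k where k: "n = Suc k" by (cases n) auto
  have m1: "measure lborel (farey_C u (Suc n)) = HH (Suc k) 1 - HH (Suc k) u"
    unfolding farey_C_def k diff_Suc_1 using assms by (intro pre_interval) auto
  have m2: "measure lborel (farey_C u n) = HH k 1 - HH k u"
    unfolding farey_C_def k diff_Suc_1 using assms by (intro pre_interval) auto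
  have e1: "HH (Suc k) 1 - HH (Suc k) u = HH k (1/(1+u)) - HH k (u/(1+u))" by simp
  have Q: "HH k u - HH k (u/(1+u)) \<le> HH k ((1/u)*u) - HH k ((1/u)*(u/(1+u)))"
    using assms by (intro HH_Q) (auto simp: field_simps)
  have "(1/u)*u = 1" "(1/u)*(u/(1+u)) = 1/(1+u)" using assms by auto
  then show "measure lborel (farey_C u (Suc n)) \<le> measure lborel (farey_C u n)"
    using m1 m2 e1 Q by simp
qed

end
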